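(* Let $R_0^*\in SO(3)$ with unit quaternion representation $w_0^*\in\mathbb{S}^3$, let $1\le k^*<\ell$ (there is at least one outlier; $k^*$ may be such that the inlier set is $\{1,\dots,k^*\}$), let $(y_i,x_i)\in\mathbb{R}^3\times\mathbb{R}^3$ with $y_i=R_0^*x_i$ for $i=1,\dots,k^*$ (noiseless inliers) and $(y_j,x_j)$ arbitrary for $j=k^*+1,\dots,\ell$ (outliers), and let $c_1^2,\dots,c_\ell^2\ge0$. Let $\omega^*=[w_0^*;\dots;w_0^*;0;\dots;0]\in\mathbb{R}^{4(\ell+1)}$, where $w_0^*$ appears $k^*+1$ times followed by zero blocks, and $\mathcal{W}^*=\omega^*(\omega^* )^\top$. Then: (1) If $0<c_j^2<\lambda_{\min}(Q_j)$ for all $j=k^*+1,\dots,\ell$, then (SDR) is tight, admitting $\mathcal{W}^*$ as a global minimizer. (2) If $c_j^2>(w_0^* )^\top Q_jw_0^*$ for some $j\in\{k^*+1,\dots,\ell\}$, then $\mathcal{W}^*$ is not a global minimizer of (SDR).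
   Context: For $w=[w_1;w_2;w_3;w_4]\in\mathbb{S}^3$, $R(w)=\begin{bmatrix} w_1^2+w_2^2-w_3^2-w_4^2 & 2(w_2w_3-w_1w_4) & 2(w_2w_4+w_1w_3)\\ 2(w_2w_3+w_1w_4) & w_1^2+w_3^2-w_2^2-w_4^2 & 2(w_3w_4-w_1w_2)\\ 2(w_2w_4-w_1w_3) & 2(w_3w_4+w_1w_2) & w_1^2+w_4^2-w_2^2-w_3^2\end{bmatrix}\in SO(3)$; $\pm w$ are the unit quaternion representations of $R(w)$. $Q_i$ is the unique symmetric $4\times4$ matrix with $w^\top Q_iw=\|y_i-R(w)x_i\|_2^2$ for all $w\in\mathbb{S}^3$; $\lambda_{\min}$ is the smallest eigenvalue. For $\mathcal{A}\in\mathbb{R}^{4(\ell+1)\times4(\ell+1)}$, $[\mathcal{A}]_{ij}$ ($0\le i,j\le\ell$) is the $4\times4$ block in rows $4i+1..4i+4$, columns $4j+1..4j+4$. $\mathcal{Q}$ is symmetric with $[\mathcal{Q}]_{0i}=[\mathcal{Q}]_{i0}=\frac12(Q_i-c_i^2I_4)$ ($i\ge1$), other blocks zero. (QCQP): minimize $\operatorname{tr}(\mathcal{Q}\omega\omega^\top)+\sum_ic_i^2$ over $\omega\in\mathbb{R}^{4(\ell+1)}$ s.t. $[\omega\omega^\top]_{0i}=[\omega\omega^\top]_{ii}$ ($i=1..\ell$), $\operatorname{tr}([\omega\omega^\top]_{00})=1$. (SDR): minimize $\operatorname{tr}(\mathcal{Q}\mathcal{W})+\sum_ic_i^2$ over symmetric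 $\mathcal{W}\succeq0$ s.t. $[\mathcal{W}]_{0i}=[\mathcal{W}]_{ii}$ ($i=1..\ell$), $\operatorname{tr}([\mathcal{W}]_{00})=1$. (SDR) is tight if it admits $\hat\omega\hat\omega^\top$ as a global minimizer, where $\hat\omega$ is a global minimizer of (QCQP). *)

theory Defs
  imports "HOL-Analysis.Analysis"
begin

definition rotq :: "real^4 \<Rightarrow> real^3^3" where
  "rotq w = (let w1 = w$1; w2 = w$2; w3 = w$3; w4 = w$4 in vector [
     vector [w1^2+w2^2-w3^2-w4^2, 2*(w2*w3-w1*w4), 2*(w2*w4+w1*w3)],
     vector [2*(w2*w3+w1*w4), w1^2+w3^2-w2^2-w4^2, 2*(w3*w4-w1*w2)],
     vector [2*(w2*w4-w1*w3), 2*(w3*w4+w1*w2), w1^2+w4^2-w2^2-w3^2]])"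

definition Qmat :: "real^3 \<Rightarrow> real^3 \<Rightarrow> real^4^4" where
  "Qmat y x = (THE Q. transpose Q = Q \<and>
      (\<forall>w::real^4. norm w = 1 \<longrightarrow> w \<bullet> (Q *v w) = (norm (y - rotq w *v x))^2))"

definition lambda_min :: "real^4^4 \<Rightarrow> real" where
  "lambda_min Q = Min {\<mu>. \<exists>v::real^4. v \<noteq> 0 \<and> Q *v v = \<mu> *\<^sub>R v}"

text \<open>Flat index a (0..3) inside a 4-block corresponds to quaternion component a+1.\<close>
definition qi :: "nat \<Rightarrow> 4" where
  "qi a = of_nat (Suc a)"

text \<open>Matrices in R^{4(l+1) x 4(l+1)} are functions nat => nat => real, with entries
  (p,q), p,q < 4(l+1) (0-based); block [A]_ij consists of rows 4i..4i+3, cols 4j..4j+3.\<close>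
definition bigQ :: "nat \<Rightarrow> (nat \<Rightarrow> real^3) \<Rightarrow> (nat \<Rightarrow> real^3) \<Rightarrow> (nat \<Rightarrow> real)
                    \<Rightarrow> nat \<Rightarrow> nat \<Rightarrow> real" where
  "bigQ l y x c2 p q =
     (let i = p div 4; j = q div 4; a = p mod 4; b = q mod 4 in
      if i = 0 \<and> 1 \<le> j \<and> j \<le> l then
        (1/2) * ((Qmat (y j) (x j)) $ qi a $ qi b - (if a = b then c2 j else 0))
      else if j = 0 \<and> 1 \<le> i \<and> i \<le> l then
        (1/2) * ((Qmat (y i) (x i)) $ qi a $ qi b - (if a = b then c2 i else 0))
      else 0)"

definition outer :: "(nat \<Rightarrow> real) \<Rightarrow> nat \<Rightarrow> nat \<Rightarrow> real" where
  "outer \<omega> = (\<lambda>p q. \<omega> p * \<omega> q)"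

definition sdr_obj :: "nat \<Rightarrow> (nat \<Rightarrow> real^3) \<Rightarrow> (nat \<Rightarrow> real^3) \<Rightarrow> (nat \<Rightarrow> real)
                    \<Rightarrow> (nat \<Rightarrow> nat \<Rightarrow> real) \<Rightarrow> real" where
  "sdr_obj l y x c2 W =
     (\<Sum>p<4*(l+1). \<Sum>q<4*(l+1). bigQ l y x c2 p q * W q p) + (\<Sum>i=1..l. c2 i)"

definition block_constraints :: "nat \<Rightarrow> (nat \<Rightarrow> nat \<Rightarrow> real) \<Rightarrow> bool" where
  "block_constraints l W =
     ((\<forall>i\<in>{1..l}. \<forall>a<4. \<forall>b<4. W a (4*i+b) = W (4*i+a) (4*i+b)) \<and>
      (\<Sum>a<4. W a a) = 1)"

definition sdr_feasible :: "nat \<Rightarrow> (nat \<Rightarrow> nat \<Rightarrow> real) \<Rightarrow> bool" where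
  "sdr_feasible l W =
     ((\<forall>p<4*(l+1). \<forall>q<4*(l+1). W p q = W q p) \<and>
      (\<forall>v::nat \<Rightarrow> real. 0 \<le> (\<Sum>p<4*(l+1). \<Sum>q<4*(l+1). v p * W p q * v q)) \<and>
      block_constraints l W)"

definition sdr_global_min where
  "sdr_global_min l y x c2 W =
     (sdr_feasible l W \<and> (\<forall>W'. sdr_feasible l W' \<longrightarrow> sdr_obj l y x c2 W \<le> sdr_obj l y x c2 W'))"

definition qcqp_feasible :: "nat \<Rightarrow> (nat \<Rightarrow> real) \<Rightarrow> bool" where
  "qcqp_feasible l \<omega> = block_constraints l (outer \<omega>)"

definition qcqp_global_min where
  "qcqp_global_min l y x c2 \<omega> =
     (qcqp_feasible l \<omega> \<and> (\<forall>\<omega>'. qcqp_feasible l \<omega>' \<longrightarrow>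
         sdr_obj l y x c2 (outer \<omega>) \<le> sdr_obj l y x c2 (outer \<omega>')))"

definition sdr_tight where
  "sdr_tight l y x c2 = (\<exists>\<omega>. qcqp_global_min l y x c2 \<omega> \<and> sdr_global_min l y x c2 (outer \<omega>))"

definition omega_star :: "nat \<Rightarrow> real^4 \<Rightarrow> nat \<Rightarrow> real" where
  "omega_star k w0 p = (if p div 4 \<le> k then w0 $ qi (p mod 4) else 0)"

end

theory Submission
  imports Defs
begin


definition V4 :: "'a \<Rightarrow> 'a \<Rightarrow> 'a \<Rightarrow> 'a \<Rightarrow> 'a^4" where
  "V4 a b c d = (\<chi> j. if j = 1 then a else if j = 2 then b else if j = 3 then c else d)"

lemma V4_nth[simp]: "V4 a b c d $ 1 = a" "V4 a b c d $ 2 = b" "V4 a b c d $ 3 = c" "V4 a b c d $ 4 = d"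
  by (simp_all add: V4_def)

definition Q0 :: "real^3 \<Rightarrow> real^3 \<Rightarrow> real^4^4" where
  "Q0 y x = (let y1 = y$1; y2 = y$2; y3 = y$3; x1 = x$1; x2 = x$2; x3 = x$3;
     s = y1^2+y2^2+y3^2+x1^2+x2^2+x3^2;
     P11 = y1*x1 + y2*x2 + y3*x3; P22 = y1*x1 - y2*x2 - y3*x3;
     P33 = -y1*x1 + y2*x2 - y3*x3; P44 = -y1*x1 - y2*x2 + y3*x3;
     P12 = -y2*x3 + y3*x2; P13 = y1*x3 - y3*x1; P14 = -y1*x2 + y2*x1;
     P23 = y1*x2 + y2*x1; P24 = y1*x3 + y3*x1; P34 = y2*x3 + y3*x2 in
     V4 (V4 (s - 2*P11) (-2*P12) (-2*P13) (-2*P14))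
        (V4 (-2*P12) (s - 2*P22) (-2*P23) (-2*P24))
        (V4 (-2*P13) (-2*P23) (s - 2*P33) (-2*P34))
        (V4 (-2*P14) (-2*P24) (-2*P34) (s - 2*P44)))"

lemma Q0_sym: "transpose (Q0 y x) = Q0 y x"
  unfolding transpose_def Q0_def Let_def vec_eq_iff forall_4 by simp

lemma Q0_form: "w \<bullet> (Q0 y x *v w) = (w \<bullet> w) * (y \<bullet> y + x \<bullet> x) - 2 * (y \<bullet> (rotq w *v x))"
  unfolding Q0_def Let_def rotq_def
  by (simp add: inner_vec_def matrix_vector_mult_def sum_4 sum_3 power2_eq_square algebra_simps)

lemma rot_norm: "norm (y - rotq w *v x) ^ 2 = y \<bullet> y - 2 * (y \<bullet> (rotq w *v x)) + (w \<bullet> w)^2 * (x \<bullet> x)"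
  unfolding rotq_def Let_def power2_norm_eq_inner
  by (simp add: inner_vec_def matrix_vector_mult_def sum_4 sum_3 power2_eq_square algebra_simps)




lemma sym_inner:
  fixes A :: "real^'n^'n"
  assumes "transpose A = A"
  shows "(A *v u) \<bullet> w = u \<bullet> (A *v w)"
proof -
  have s: "A $ i $ j = A $ j $ i" for i j using assms by (metis transpose_def vec_lambda_beta)
  have "(A *v u) \<bullet> w = (\<Sum>i\<in>UNIV. \<Sum>j\<in>UNIV. A$i$j * u$j * w$i)"
    by (simp add: inner_vec_def matrix_vector_mult_def sum_distrib_right)
  also have "\<dots> = (\<Sum>j\<in>UNIV. \<Sum>i\<in>UNIV. A$i$j * u$j * w$i)" by (rule sum.swap)
  also have "\<dots> = u \<bullet> (A *v w)"
    by (simp add: inner_vec_def matrix_vector_mult_def sum_distrib_left s mult.commute mult.left_commute)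
  finally show ?thesis .
qed

lemma form_scale:
  fixes A :: "real^'n^'n"
  shows "(c *\<^sub>R u) \<bullet> (A *v (c *\<^sub>R u)) = c^2 * (u \<bullet> (A *v u))"
  by (simp add: matrix_vector_mult_scaleR power2_eq_square)

lemma form_sphere:
  fixes A :: "real^'n^'n"
  assumes "\<And>u. norm u = 1 \<Longrightarrow> P (u \<bullet> (A *v u))" "P 0" "\<And>c t. P t \<Longrightarrow> c > 0 \<Longrightarrow> P (c * t)"
  shows "P (w \<bullet> (A *v w))"
proof (cases "w = 0")
  case True then show ?thesis using assms(2) by simp
next
  case False
  define u where "u = (1 / norm w) *\<^sub>R w"
  have u1: "norm u = 1" using False by (simp add: u_def)
  have w: "w = norm w *\<^sub>R u" using False by (simp add: u_def)
  have "w \<bullet> (A *v w) = (norm w)^2 * (u \<bullet> (A *v u))" by (subst w, subst (2) w, rule form_scale)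
  then show ?thesis using assms(1)[OF u1] assms(3) False by simp
qed

lemma form_zero:
  fixes D :: "real^'n^'n"
  assumes s: "transpose D = D" and z: "\<And>w. w \<bullet> (D *v w) = 0"
  shows "D = 0"
proof -
  have "D *v v = 0" for v
  proof -
    let ?u = "D *v v"
    have "(?u + v) \<bullet> (D *v (?u + v)) = 0" by (rule z)
    then have "?u \<bullet> (D *v ?u) + ?u \<bullet> (D *v v) + v \<bullet> (D *v ?u) + v \<bullet> (D *v v) = 0"
      by (simp add: matrix_vector_right_distrib inner_add_left inner_add_right)
    moreover have "v \<bullet> (D *v ?u) = ?u \<bullet> (D *v v)" using sym_inner[OF s, of v ?u] by (simp add: inner_commute)
    ultimately have "?u \<bullet> ?u = 0" using z[of ?u] z[of v] by simp
    then show ?thesis by simp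
  qed
  then show ?thesis by (subst matrix_eq) simp
qed

lemma Qmat_eq: "Qmat y x = Q0 y x"
  unfolding Qmat_def
proof (rule the_equality)
  show "transpose (Q0 y x) = Q0 y x \<and> (\<forall>w. norm w = 1 \<longrightarrow> w \<bullet> (Q0 y x *v w) = (norm (y - rotq w *v x))\<^sup>2)"
  proof (intro conjI allI impI)
    fix w :: "real^4" assume "norm w = 1"
    then have "w \<bullet> w = 1" using power2_norm_eq_inner[of w] by simp
    then show "w \<bullet> (Q0 y x *v w) = (norm (y - rotq w *v x))\<^sup>2" by (simp add: Q0_form rot_norm)
  qed (rule Q0_sym)
next
  fix Q assume a: "transpose Q = Q \<and> (\<forall>w. norm w = 1 \<longrightarrow> w \<bullet> (Q *v w) = (norm (y - rotq w *v x))\<^sup>2)"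
  have 1: "w \<bullet> (Q0 y x *v w) = (norm (y - rotq w *v x))\<^sup>2" if "norm w = 1" for w
  proof -
    from that have "w \<bullet> w = 1" using power2_norm_eq_inner[of w] by simp
    then show ?thesis by (simp add: Q0_form rot_norm)
  qed
  let ?D = "Q - Q0 y x"
  have "transpose ?D = transpose Q - transpose (Q0 y x)" by (simp add: vec_eq_iff transpose_def)
  then have "transpose ?D = ?D" using a Q0_sym by simp
  moreover have "w \<bullet> (?D *v w) = 0" for w
  proof (rule form_sphere[where P="\<lambda>t. t = 0"])
    fix u :: "real^4" assume "norm u = 1"
    then show "u \<bullet> (?D *v u) = 0" using a 1 by (simp add: matrix_vector_mult_diff_rdistrib inner_diff_right)
  qed simp_all
  ultimately have "?D = 0" by (rule form_zero)
  then show "Q = Q0 y x" by simp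
qed



definition qf :: "nat \<Rightarrow> (nat \<Rightarrow> nat \<Rightarrow> real) \<Rightarrow> (nat \<Rightarrow> real) \<Rightarrow> real" where
  "qf n B v = (\<Sum>p<n. \<Sum>q<n. v p * B p q * v q)"

lemma qf_Suc:
  assumes "\<forall>p<Suc n. \<forall>q<Suc n. B p q = B q p"
  shows "qf (Suc n) B v = qf n B v + 2 * v n * (\<Sum>p<n. v p * B p n) + (v n)^2 * B n n"
proof -
  have s: "(\<Sum>q<n. v n * B n q * v q) = v n * (\<Sum>p<n. v p * B p n)"
    using assms by (simp add: sum_distrib_left mult.commute mult.left_commute)
  have "qf (Suc n) B v = qf n B v + (\<Sum>p<n. v p * B p n * v n) + (\<Sum>q<n. v n * B n q * v q) + v n * B n n * v n"
    by (simp add: qf_def sum.distrib)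
  also have "(\<Sum>p<n. v p * B p n * v n) = v n * (\<Sum>p<n. v p * B p n)"
    by (simp add: sum_distrib_left mult.commute mult.left_commute)
  finally show ?thesis using s by (simp add: power2_eq_square)
qed

lemma qf_cong: "(\<And>p. p < n \<Longrightarrow> v p = w p) \<Longrightarrow> qf n B v = qf n B w"
  by (simp add: qf_def)

lemma qf_delta: "p < n \<Longrightarrow> qf n B (\<lambda>q. if q = p then t else 0) = t^2 * B p p"
proof -
  have i1: "(if c then a else 0) * (x::real) = (if c then a*x else 0)" for c a x by simp
  have i2: "(x::real) * (if c then a else 0) = (if c then x*a else 0)" for c a x by simp
  assume "p < n" then show ?thesis by (simp add: qf_def i1 i2 power2_eq_square)
qed

lemma quad_nonneg_zero:
  fixes a b :: real
  assumes "a \<ge> 0" "\<And>t. 0 \<le> t^2 * a + 2 * t * b"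
  shows "b = 0"
proof (rule ccontr)
  assume "b \<noteq> 0"
  define t where "t = - b / (a + 1)"
  have "t^2 * a + 2 * t * b = - (b*b * (a + 2) / ((a+1)*(a+1)))"
  proof -
    have a1: "a + 1 \<noteq> 0" using assms(1) by simp
    show ?thesis unfolding t_def power2_eq_square using a1 by (simp add: divide_simps) (simp add: algebra_simps)
  qed
  moreover have "b*b * (a + 2) / ((a+1)*(a+1)) > 0" 
  proof -
    have bb: "b*b > 0" using \<open>b \<noteq> 0\<close> not_real_square_gt_zero[of b] by blast
    show ?thesis by (rule divide_pos_pos, rule mult_pos_pos[OF bb]) (use assms(1) in auto)
  qed
  ultimately show False using assms(2)[of t] by linarith
qed


lemma chol:
  fixes B :: "nat \<Rightarrow> nat \<Rightarrow> real"
  assumes "\<forall>p<n. \<forall>q<n. B p q = B q p" "\<forall>v. 0 \<le> qf n B v"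
  shows "\<exists>U. \<forall>p<n. \<forall>q<n. B p q = (\<Sum>k<n. U k p * U k q)"
  using assms
proof (induction n arbitrary: B)
  case 0 then show ?case by simp
next
  case (Suc n)
  note sym = Suc.prems(1) and psd = Suc.prems(2)
  define d where "d = B n n"
  define B' where "B' p q = B p q - B p n * B q n / d" for p q
  have d0: "d \<ge> 0"
  proof -
    have "0 \<le> qf (Suc n) B (\<lambda>q. if q = n then 1 else 0)" using psd by blast
    also have "\<dots> = d" by (subst qf_delta) (auto simp: d_def)
    finally show ?thesis .
  qed
  have zero: "B p n = 0" if "d = 0" "p < n" for p
  proof (rule quad_nonneg_zero)
    show "B p p \<ge> 0" using psd qf_delta[of p "Suc n" B 1] that(2) by (metis less_SucI mult_1 one_power2)
    fix t :: real
    let ?v = "\<lambda>q. if q = p then t else if q = n then 1 else 0"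
    have "0 \<le> qf (Suc n) B ?v" using psd by blast
    also have "\<dots> = qf n B ?v + 2 * (\<Sum>q<n. ?v q * B q n) + B n n"
      using qf_Suc[OF sym] that(2) by simp
    also have "qf n B ?v = qf n B (\<lambda>q. if q = p then t else 0)" by (rule qf_cong) simp
    also have "\<dots> = t^2 * B p p" using that(2) by (rule qf_delta)
    also have "(\<Sum>q<n. ?v q * B q n) = (\<Sum>q<n. if q = p then t * B p n else 0)"
      by (rule sum.cong) auto
    also have "\<dots> = t * B p n" using that(2) by simp
    finally show "0 \<le> t^2 * B p p + 2 * t * B p n" using that(1) by (simp add: d_def)
  qed
  have symB': "\<forall>p<n. \<forall>q<n. B' p q = B' q p" using sym by (simp add: B'_def mult.commute)
  have psdB': "\<forall>v. 0 \<le> qf n B' v"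
  proof
    fix v
    define s where "s = (\<Sum>p<n. v p * B p n)"
    define v' where "v' p = (if p < n then v p else - s / d)" for p
    have "qf n B' v = qf n B v - s * s / d"
    proof -
      have "qf n B' v = (\<Sum>p<n. \<Sum>q<n. v p * B p q * v q - (v p * B p n) * (v q * B q n) / d)"
        unfolding qf_def B'_def by (rule sum.cong, simp, rule sum.cong, simp, simp add: algebra_simps)
      also have "\<dots> = qf n B v - (\<Sum>p<n. \<Sum>q<n. (v p * B p n) * (v q * B q n)) / d"
        by (simp add: qf_def sum_subtractf sum_divide_distrib)
      also have "(\<Sum>p<n. \<Sum>q<n. (v p * B p n) * (v q * B q n)) = s * s"
        by (simp add: s_def sum_product)
      finally show ?thesis .
    qed
    also have "\<dots> = qf (Suc n) B v'"
    proof -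
      have "qf (Suc n) B v' = qf n B v' + 2 * v' n * (\<Sum>p<n. v' p * B p n) + (v' n)^2 * B n n"
        by (rule qf_Suc[OF sym])
      also have "qf n B v' = qf n B v" by (rule qf_cong) (simp add: v'_def)
      also have "(\<Sum>p<n. v' p * B p n) = s" by (simp add: s_def v'_def)
      finally have "qf (Suc n) B v' = qf n B v + 2 * v' n * s + (v' n)^2 * B n n" .
      moreover have vn: "v' n = - s / d" by (simp add: v'_def)
      ultimately have "qf (Suc n) B v' = qf n B v + 2 * (- s / d) * s + (- s / d)^2 * d"
        by (simp add: d_def)
      also have "\<dots> = qf n B v - s * s / d"
        using d0 by (cases "d = 0") (simp_all add: field_simps power2_eq_square)
      finally show ?thesis by simp
    qed
    also have "\<dots> \<ge> 0" using psd by blast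
    finally show "0 \<le> qf n B' v" .
  qed
  obtain U where U: "\<forall>p<n. \<forall>q<n. B' p q = (\<Sum>k<n. U k p * U k q)"
    using Suc.IH[OF symB' psdB'] by blast
  define U' where "U' k p = (if k < n then (if p < n then U k p else 0) else B p n / sqrt d)" for k p
  have "\<forall>p<Suc n. \<forall>q<Suc n. B p q = (\<Sum>k<Suc n. U' k p * U' k q)"
  proof (intro allI impI)
    fix p q assume p: "p < Suc n" and q: "q < Suc n"
    have last: "U' n p * U' n q = B p n * B q n / d"
      using d0 by (simp add: U'_def)
    have "(\<Sum>k<Suc n. U' k p * U' k q) = (\<Sum>k<n. U' k p * U' k q) + B p n * B q n / d"
      using last by simp
    also have "(\<Sum>k<n. U' k p * U' k q) = (if p < n \<and> q < n then B' p q else 0)"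
      using U by (cases "p < n"; cases "q < n") (simp_all add: U'_def)
    finally have e: "(\<Sum>k<Suc n. U' k p * U' k q) = (if p < n \<and> q < n then B' p q else 0) + B p n * B q n / d" .
    show "B p q = (\<Sum>k<Suc n. U' k p * U' k q)"
    proof (cases "p < n \<and> q < n")
      case True then show ?thesis using e by (simp add: B'_def)
    next
      case False
      then have "p = n \<or> q = n" using p q by auto
      then show ?thesis
      proof
        assume pn: "p = n"
        show ?thesis
        proof (cases "d = 0")
          case True
          have "B n q = 0" using zero[OF True] True q sym d_def
            by (metis less_Suc_eq)
          then show ?thesis using e pn True by simp
        next
          case False then show ?thesis using e pn sym q by (simp add: d_def)
        qed
      next
        assume qn: "q = n"
        show ?thesis
        proof (cases "d = 0")
          case True
          have "B p n = 0" using zero[OF True] True p d_def by (metis less_Suc_eq)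
          then show ?thesis using e qn True by simp
        next
          case False then show ?thesis using e qn by (simp add: d_def)
        qed
      qed
    qed
  qed
  then show ?case by blast
qed



lemma form4:
  fixes A :: "real^4^4" and g :: "nat \<Rightarrow> real"
  shows "(\<Sum>a<4. \<Sum>b<4. (A$qi a$qi b - (if a = b then c else 0)) * (g a * g b))
       = V4 (g 0) (g 1) (g 2) (g 3) \<bullet> (A *v V4 (g 0) (g 1) (g 2) (g 3)) - c * (V4 (g 0) (g 1) (g 2) (g 3) \<bullet> V4 (g 0) (g 1) (g 2) (g 3))"
  by (simp add: qi_def numeral_eq_Suc lessThan_Suc inner_vec_def matrix_vector_mult_def sum_4 algebra_simps)

lemma form4v:
  fixes A :: "real^4^4" and u :: "real^4"
  shows "(\<Sum>a<4. \<Sum>b<4. (A$qi a$qi b - (if a = b then c else 0)) * (u $ qi a * u $ qi b))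
       = u \<bullet> (A *v u) - c * (u \<bullet> u)"
  by (simp add: qi_def numeral_eq_Suc lessThan_Suc inner_vec_def matrix_vector_mult_def sum_4 algebra_simps)

lemma trace_psd:
  fixes A :: "real^4^4" and B :: "nat \<Rightarrow> nat \<Rightarrow> real"
  assumes A: "\<forall>w. c * (w \<bullet> w) \<le> w \<bullet> (A *v w)" and s: "\<forall>p<4. \<forall>q<4. B p q = B q p" and p: "\<forall>v. 0 \<le> qf 4 B v"
  shows "0 \<le> (\<Sum>a<4. \<Sum>b<4. (A$qi a$qi b - (if a = b then c else 0)) * B a b)"
proof -
  obtain U :: "nat \<Rightarrow> nat \<Rightarrow> real" where U: "\<forall>p<4. \<forall>q<4. B p q = (\<Sum>k<4. U k p * U k q)" using chol[OF s p] by blast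
  have "(\<Sum>a<4. \<Sum>b<4. (A$qi a$qi b - (if a = b then c else 0)) * B a b)
      = (\<Sum>a<4. \<Sum>b<4. \<Sum>k<4. (A$qi a$qi b - (if a = b then c else 0)) * (U k a * U k b))"
  proof (intro sum.cong refl)
    fix a b assume "a \<in> {..<4::nat}" "b \<in> {..<4::nat}"
    then have "B a b = (\<Sum>k<4. U k a * U k b)" using U by simp
    then show "(A$qi a$qi b - (if a = b then c else 0)) * B a b = (\<Sum>k<4. (A$qi a$qi b - (if a = b then c else 0)) * (U k a * U k b))"
      by (simp add: sum_distrib_left)
  qed
  also have "\<dots> = (\<Sum>a<4. \<Sum>k<4. \<Sum>b<4. (A$qi a$qi b - (if a = b then c else 0)) * (U k a * U k b))"
    by (rule sum.cong[OF refl], rule sum.swap)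
  also have "\<dots> = (\<Sum>k<4. \<Sum>a<4. \<Sum>b<4. (A$qi a$qi b - (if a = b then c else 0)) * (U k a * U k b))"
    by (rule sum.swap)
  also have "\<dots> \<ge> 0"
  proof (rule sum_nonneg)
    fix k
    show "0 \<le> (\<Sum>a<4. \<Sum>b<4. (A$qi a$qi b - (if a = b then c else 0)) * (U k a * U k b))"
      unfolding form4 using A[rule_format, of "V4 (U k 0) (U k 1) (U k 2) (U k 3)"] by linarith
  qed
  finally show ?thesis .
qed

lemma sum_blocks: "(\<Sum>p<4*m. f p) = (\<Sum>i<m. \<Sum>a<4. f (4*i+a::nat))"
  by (induction m) (simp_all add: numeral_eq_Suc lessThan_Suc add.assoc)



definition Mb :: "(nat \<Rightarrow> real^3) \<Rightarrow> (nat \<Rightarrow> real^3) \<Rightarrow> (nat \<Rightarrow> real) \<Rightarrow> nat \<Rightarrow> nat \<Rightarrow> nat \<Rightarrow> real" where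
  "Mb y x c2 i a b = Qmat (y i) (x i) $ qi a $ qi b - (if a = b then c2 i else 0)"

lemma bigQ_blk:
  assumes "a < 4" "b < 4"
  shows "bigQ l y x c2 (4*i+a) (4*j+b) = (if i = 0 \<and> 1 \<le> j \<and> j \<le> l then (1/2) * Mb y x c2 j a b
           else if j = 0 \<and> 1 \<le> i \<and> i \<le> l then (1/2) * Mb y x c2 i a b else 0)"
  using assms by (simp add: bigQ_def Let_def Mb_def)

lemma obj_formula:
  assumes sym: "\<forall>p<4*(l+1). \<forall>q<4*(l+1). W p q = W q p" and bc: "block_constraints l W"
  shows "sdr_obj l y x c2 W = (\<Sum>i\<in>{1..l}. \<Sum>a<4. \<Sum>b<4. Mb y x c2 i a b * W (4*i+a) (4*i+b)) + (\<Sum>i=1..l. c2 i)"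
proof -
  define T where "T i a j b = (if i = 0 \<and> 1 \<le> j \<and> j \<le> l then (1/2) * Mb y x c2 j a b
           else if j = 0 \<and> 1 \<le> i \<and> i \<le> l then (1/2) * Mb y x c2 i a b else 0)" for i a j b
  define S where "S = (\<Sum>i\<in>{1..l}. \<Sum>a<4. \<Sum>b<4. Mb y x c2 i a b * W (4*i+a) (4*i+b))"
  have 1: "(\<Sum>p<4*(l+1). \<Sum>q<4*(l+1). bigQ l y x c2 p q * W q p)
     = (\<Sum>i<l+1. \<Sum>a<4. \<Sum>j<l+1. \<Sum>b<4. T i a j b * W (4*j+b) (4*i+a))"
    unfolding sum_blocks by (intro sum.cong refl) (simp add: bigQ_blk T_def)
  have ins: "{..<l+1} = insert 0 {1..l}" by auto
  have 2: "(\<Sum>i<l+1. \<Sum>a<4. \<Sum>j<l+1. \<Sum>b<4. T i a j b * W (4*j+b) (4*i+a))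
     = (\<Sum>a<4. \<Sum>j\<in>{1..l}. \<Sum>b<4. (1/2) * Mb y x c2 j a b * W (4*j+b) a)
     + (\<Sum>i\<in>{1..l}. \<Sum>a<4. \<Sum>b<4. (1/2) * Mb y x c2 i a b * W b (4*i+a))"
    unfolding ins by (simp add: T_def)
  have 3: "(\<Sum>a<4. \<Sum>j\<in>{1..l}. \<Sum>b<4. (1/2) * Mb y x c2 j a b * W (4*j+b) a) = (1/2) * S"
  proof -
    have "(\<Sum>a<4. \<Sum>j\<in>{1..l}. \<Sum>b<4. (1/2) * Mb y x c2 j a b * W (4*j+b) a)
        = (\<Sum>a<4. \<Sum>j\<in>{1..l}. \<Sum>b<4. (1/2) * (Mb y x c2 j a b * W (4*j+a) (4*j+b)))"
    proof (intro sum.cong refl)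
      fix a j b assume a: "a \<in> {..<4::nat}" and j: "j \<in> {1..l}" and b: "b \<in> {..<4::nat}"
      have "W (4*j+b) a = W a (4*j+b)" using sym a b j by auto
      also have "\<dots> = W (4*j+a) (4*j+b)" using bc a b j unfolding block_constraints_def by auto
      finally show "(1/2) * Mb y x c2 j a b * W (4*j+b) a = (1/2) * (Mb y x c2 j a b * W (4*j+a) (4*j+b))" by simp
    qed
    also have "\<dots> = (\<Sum>j\<in>{1..l}. \<Sum>a<4. \<Sum>b<4. (1/2) * (Mb y x c2 j a b * W (4*j+a) (4*j+b)))"
      by (rule sum.swap)
    also have "\<dots> = (1/2) * S" by (simp add: S_def sum_distrib_left)
    finally show ?thesis .
  qed
  have 4: "(\<Sum>i\<in>{1..l}. \<Sum>a<4. \<Sum>b<4. (1/2) * Mb y x c2 i a b * W b (4*i+a)) = (1/2) * S"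
  proof -
    have "(\<Sum>i\<in>{1..l}. \<Sum>a<4. \<Sum>b<4. (1/2) * Mb y x c2 i a b * W b (4*i+a))
        = (\<Sum>i\<in>{1..l}. \<Sum>a<4. \<Sum>b<4. (1/2) * (Mb y x c2 i a b * W (4*i+a) (4*i+b)))"
    proof (intro sum.cong refl)
      fix a i b assume a: "a \<in> {..<4::nat}" and i: "i \<in> {1..l}" and b: "b \<in> {..<4::nat}"
      have "W b (4*i+a) = W (4*i+b) (4*i+a)" using bc a b i unfolding block_constraints_def by auto
      also have "\<dots> = W (4*i+a) (4*i+b)" using sym a b i by auto
      finally show "(1/2) * Mb y x c2 i a b * W b (4*i+a) = (1/2) * (Mb y x c2 i a b * W (4*i+a) (4*i+b))" by simp
    qed
    also have "\<dots> = (1/2) * S" by (simp add: S_def sum_distrib_left)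
    finally show ?thesis .
  qed
  show ?thesis unfolding sdr_obj_def 1 2 3 4 S_def by simp
qed


lemma eig_finite:
  fixes Q :: "real^'n^'n"
  assumes sym: "transpose Q = Q"
  shows "finite {\<mu>. \<exists>v::real^'n. v \<noteq> 0 \<and> Q *v v = \<mu> *\<^sub>R v}"
proof -
  define E where "E = {\<mu>. \<exists>v::real^'n. v \<noteq> 0 \<and> Q *v v = \<mu> *\<^sub>R v}"
  define ev where "ev \<mu> = (SOME v::real^'n. v \<noteq> 0 \<and> Q *v v = \<mu> *\<^sub>R v)" for \<mu>
  have ev: "ev \<mu> \<noteq> 0 \<and> Q *v ev \<mu> = \<mu> *\<^sub>R ev \<mu>" if "\<mu> \<in> E" for \<mu>
  proof -
    have "\<exists>v::real^'n. v \<noteq> 0 \<and> Q *v v = \<mu> *\<^sub>R v" using that by (simp add: E_def)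
    then show ?thesis unfolding ev_def by (rule someI_ex)
  qed
  have inj: "inj_on ev E"
  proof (rule inj_onI)
    fix \<mu> \<nu> assume m: "\<mu> \<in> E" and n: "\<nu> \<in> E" and e: "ev \<mu> = ev \<nu>"
    have "\<mu> *\<^sub>R ev \<mu> = Q *v ev \<mu>" using ev[OF m] by simp
    also have "\<dots> = Q *v ev \<nu>" using e by simp
    also have "\<dots> = \<nu> *\<^sub>R ev \<nu>" using ev[OF n] by simp
    also have "\<dots> = \<nu> *\<^sub>R ev \<mu>" using e by simp
    finally have "\<mu> *\<^sub>R ev \<mu> = \<nu> *\<^sub>R ev \<mu>" .
    then show "\<mu> = \<nu>" using ev[OF m] by (simp add: scaleR_cancel_right)
  qed
  have po: "pairwise orthogonal (ev ` E)"
  proof (clarsimp simp: pairwise_def)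
    fix \<mu> \<nu> assume m: "\<mu> \<in> E" and n: "\<nu> \<in> E" and ne: "ev \<mu> \<noteq> ev \<nu>"
    then have "\<mu> \<noteq> \<nu>" by auto
    have "\<mu> * (ev \<mu> \<bullet> ev \<nu>) = (Q *v ev \<mu>) \<bullet> ev \<nu>" using ev[OF m] by simp
    also have "\<dots> = ev \<mu> \<bullet> (Q *v ev \<nu>)" by (rule sym_inner[OF sym])
    also have "\<dots> = \<nu> * (ev \<mu> \<bullet> ev \<nu>)" using ev[OF n] by simp
    finally show "orthogonal (ev \<mu>) (ev \<nu>)" using \<open>\<mu> \<noteq> \<nu>\<close> by (simp add: orthogonal_def)
  qed
  have "0 \<notin> ev ` E"
  proof
    assume "0 \<in> ev ` E"
    then obtain \<mu> where "\<mu> \<in> E" "0 = ev \<mu>" by blast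
    then show False using ev[of \<mu>] by simp
  qed
  then have "independent (ev ` E)" using pairwise_orthogonal_independent[OF po] by blast
  then have "finite (ev ` E)" using independent_bound by blast
  then have "finite E" using finite_imageD[OF _ inj] by blast
  then show ?thesis by (simp add: E_def)
qed

lemma lam_min_bound:
  fixes Q :: "real^4^4"
  assumes sym: "transpose Q = Q" and c: "c < lambda_min Q"
  shows "c * (w \<bullet> w) \<le> w \<bullet> (Q *v w)"
proof -
  let ?f = "\<lambda>u::real^4. u \<bullet> (Q *v u)"
  have "sphere (0::real^4) 1 \<noteq> {}"
  proof -
    obtain b :: "real^4" where "b \<in> Basis" using nonempty_Basis by blast
    then have "b \<in> sphere 0 1" by simp
    then show ?thesis by blast
  qed
  moreover have "continuous_on (sphere (0::real^4) 1) ?f"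
    by (intro continuous_intros matrix_vector_mult_linear_continuous_on)
  ultimately obtain v where v: "v \<in> sphere 0 1" and vmin: "\<And>u. u \<in> sphere 0 1 \<Longrightarrow> ?f v \<le> ?f u"
    using continuous_attains_inf[OF compact_sphere] by blast
  define m where "m = ?f v"
  have v1: "norm v = 1" using v by simp
  then have vv: "v \<bullet> v = 1" using power2_norm_eq_inner[of v] by simp
  have lb: "m * (u \<bullet> u) \<le> ?f u" for u
  proof (cases "u = 0")
    case True then show ?thesis by simp
  next
    case False
    define z where "z = (1 / norm u) *\<^sub>R u"
    have z1: "norm z = 1" using False by (simp add: z_def)
    have uz: "u = norm u *\<^sub>R z" using False by (simp add: z_def)
    have "?f u = (norm u)^2 * ?f z" by (subst uz, subst (2) uz, rule form_scale)
    moreover have "m \<le> ?f z" unfolding m_def using vmin[of z] z1 by simp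
    then have "m * (norm u)^2 \<le> ?f z * (norm u)^2" by (rule mult_right_mono) simp
    moreover have "u \<bullet> u = (norm u)^2" by (simp add: power2_norm_eq_inner)
    ultimately show ?thesis by (simp add: mult.commute)
  qed
  have eig: "Q *v v = m *\<^sub>R v"
  proof -
    have orth: "u \<bullet> (Q *v v - m *\<^sub>R v) = 0" for u
    proof -
      have "u \<bullet> (Q *v v) - m * (u \<bullet> v) = 0"
      proof (rule quad_nonneg_zero)
        show "0 \<le> ?f u - m * (u \<bullet> u)" using lb[of u] by simp
        fix t :: real
        have sv: "v \<bullet> (Q *v u) = u \<bullet> (Q *v v)" using sym_inner[OF sym, of v u] by (simp add: inner_commute)
        have "?f (v + t *\<^sub>R u) - m * ((v + t *\<^sub>R u) \<bullet> (v + t *\<^sub>R u))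
            = (?f v - m * (v \<bullet> v)) + 2 * t * (u \<bullet> (Q *v v) - m * (u \<bullet> v)) + t^2 * (?f u - m * (u \<bullet> u))"
        proof -
          have q: "Q *v (v + t *\<^sub>R u) = Q *v v + t *\<^sub>R (Q *v u)"
            by (simp add: matrix_vector_right_distrib matrix_vector_mult_scaleR)
          have e1: "?f (v + t *\<^sub>R u) = ?f v + t * (v \<bullet> (Q *v u)) + t * (u \<bullet> (Q *v v)) + t * t * ?f u"
            unfolding q by (simp add: inner_add_left inner_add_right algebra_simps)
          have e2: "(v + t *\<^sub>R u) \<bullet> (v + t *\<^sub>R u) = v \<bullet> v + t * (v \<bullet> u) + t * (u \<bullet> v) + t * t * (u \<bullet> u)"
            by (simp add: inner_add_left inner_add_right algebra_simps)
          have e3: "v \<bullet> u = u \<bullet> v" by (rule inner_commute)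
          show ?thesis unfolding e1 e2 e3 sv by (simp add: algebra_simps power2_eq_square)
        qed
        moreover have "?f v - m * (v \<bullet> v) = 0" using vv by (simp add: m_def)
        moreover have "0 \<le> ?f (v + t *\<^sub>R u) - m * ((v + t *\<^sub>R u) \<bullet> (v + t *\<^sub>R u))" using lb by simp
        ultimately show "0 \<le> t^2 * (?f u - m * (u \<bullet> u)) + 2 * t * (u \<bullet> (Q *v v) - m * (u \<bullet> v))" by linarith
      qed
      then show ?thesis by (simp add: inner_diff_right)
    qed
    from orth[of "Q *v v - m *\<^sub>R v"] show ?thesis by simp
  qed
  have "v \<noteq> 0" using v1 by auto
  then have mE: "m \<in> {\<mu>. \<exists>v::real^4. v \<noteq> 0 \<and> Q *v v = \<mu> *\<^sub>R v}" using eig by blast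
  have "lambda_min Q \<le> m" unfolding lambda_min_def using Min_le[OF eig_finite[OF sym] mE] .
  then have "c \<le> m" using c by simp
  then have "c * (w \<bullet> w) \<le> m * (w \<bullet> w)" by (simp add: mult_right_mono)
  also have "\<dots> \<le> ?f w" by (rule lb)
  finally show ?thesis .
qed



lemma Qmat_sym: "transpose (Qmat y x) = Qmat y x"
  by (simp add: Qmat_eq Q0_sym)

lemma Qmat_unit: "norm w = 1 \<Longrightarrow> w \<bullet> (Qmat y x *v w) = (norm (y - rotq w *v x))^2"
proof -
  assume "norm w = 1"
  then have "w \<bullet> w = 1" using power2_norm_eq_inner[of w] by simp
  then show ?thesis by (simp add: Qmat_eq Q0_form rot_norm)
qed

lemma Qmat_psd: "0 * (w \<bullet> w) \<le> w \<bullet> (Qmat y x *v w)"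
proof -
  have "0 \<le> w \<bullet> (Qmat y x *v w)"
    by (rule form_sphere[where P="\<lambda>t. 0 \<le> t"]) (simp_all add: Qmat_unit)
  then show ?thesis by simp
qed

lemma sum_single:
  assumes "finite A" "i \<in> A" "\<And>j. j \<in> A \<Longrightarrow> j \<noteq> i \<Longrightarrow> g j = 0"
  shows "sum g A = g i"
proof -
  have "sum g A = g i + sum g (A - {i})" using assms(1,2) by (rule sum.remove)
  also have "sum g (A - {i}) = 0" using assms(3) by (intro sum.neutral) auto
  finally show ?thesis by simp
qed

lemma feas_sym: "sdr_feasible l W \<Longrightarrow> p < 4*(l+1) \<Longrightarrow> q < 4*(l+1) \<Longrightarrow> W p q = W q p"
  by (simp add: sdr_feasible_def)

lemma blk_sym:
  assumes "sdr_feasible l W" "i \<in> {1..l}"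
  shows "\<forall>p<4. \<forall>q<4. W (4*i+p) (4*i+q) = W (4*i+q) (4*i+p)"
  using assms by (auto intro!: feas_sym)

lemma blk_psd:
  assumes F: "sdr_feasible l W" and i: "i \<in> {1..l}"
  shows "0 \<le> qf 4 (\<lambda>a b. W (4*i+a) (4*i+b)) v"
proof -
  define v' where "v' p = (if p div 4 = i then v (p mod 4) else 0)" for p
  have v': "v' (4*i1+a) = (if i1 = i then v a else 0)" if "a < 4" for i1 a
    using that by (simp add: v'_def)
  have "0 \<le> (\<Sum>p<4*(l+1). \<Sum>q<4*(l+1). v' p * W p q * v' q)"
    using F by (simp add: sdr_feasible_def)
  also have "\<dots> = (\<Sum>i1<l+1. \<Sum>a<4. \<Sum>j1<l+1. \<Sum>b<4. v' (4*i1+a) * W (4*i1+a) (4*j1+b) * v' (4*j1+b))"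
    unfolding sum_blocks ..
  also have "\<dots> = (\<Sum>i1<l+1. \<Sum>a<4. \<Sum>b<4. v' (4*i1+a) * W (4*i1+a) (4*i+b) * v' (4*i+b))"
  proof (rule sum.cong[OF refl], rule sum.cong[OF refl])
    fix i1 a assume "a \<in> {..<4::nat}"
    show "(\<Sum>j1<l+1. \<Sum>b<4. v' (4*i1+a) * W (4*i1+a) (4*j1+b) * v' (4*j1+b))
        = (\<Sum>b<4. v' (4*i1+a) * W (4*i1+a) (4*i+b) * v' (4*i+b))"
      by (rule sum_single[where g="\<lambda>j1. \<Sum>b<4. v' (4*i1+a) * W (4*i1+a) (4*j1+b) * v' (4*j1+b)"])
         (use i in \<open>auto simp: v'\<close>)
  qed
  also have "\<dots> = (\<Sum>a<4. \<Sum>b<4. v' (4*i+a) * W (4*i+a) (4*i+b) * v' (4*i+b))"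
    by (rule sum_single[where g="\<lambda>i1. \<Sum>a<4. \<Sum>b<4. v' (4*i1+a) * W (4*i1+a) (4*i+b) * v' (4*i+b)"])
       (use i in \<open>auto simp: v'\<close>)
  also have "\<dots> = qf 4 (\<lambda>a b. W (4*i+a) (4*i+b)) v"
    unfolding qf_def by (intro sum.cong refl) (simp add: v')
  finally show ?thesis .
qed

lemma dsum:
  fixes s t N :: nat
  assumes "s < N" "t < N"
  shows "(\<Sum>q<N. g q * ((if q = s then 1 else 0) - (if q = t then 1 else (0::real)))) = g s - g t"
proof -
  have "(\<Sum>q<N. g q * ((if q = s then 1 else 0) - (if q = t then 1 else (0::real))))
      = (\<Sum>q<N. (if q = s then g q else 0)) - (\<Sum>q<N. (if q = t then g q else 0))"
    by (simp add: right_diff_distrib sum_subtractf if_distrib[where f="\<lambda>x. g _ * x"] cong: if_cong)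
  also have "\<dots> = g s - g t" using assms by (simp add: sum.delta sum.delta')
  finally show ?thesis .
qed

lemma qf2:
  fixes s t N :: nat
  assumes "s \<noteq> t" "s < N" "t < N"
  shows "(\<Sum>p<N. \<Sum>q<N. ((if p = s then 1 else 0) - (if p = t then 1 else 0)) * W p q *
            ((if q = s then 1 else 0) - (if q = t then (1::real) else 0)))
       = W s s - W s t - W t s + W t t"
proof -
  have "(\<Sum>p<N. \<Sum>q<N. ((if p = s then 1 else 0) - (if p = t then 1 else 0)) * W p q *
            ((if q = s then 1 else 0) - (if q = t then (1::real) else 0)))
      = (\<Sum>p<N. (W p s - W p t) * ((if p = s then 1 else 0) - (if p = t then 1 else 0)))"
  proof (rule sum.cong[OF refl])
    fix p
    have "(\<Sum>q<N. ((if p = s then 1 else 0) - (if p = t then 1 else 0)) * W p q *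
            ((if q = s then 1 else 0) - (if q = t then (1::real) else 0)))
        = ((if p = s then 1 else 0) - (if p = t then 1 else 0)) * (\<Sum>q<N. W p q *
            ((if q = s then 1 else 0) - (if q = t then (1::real) else 0)))"
      by (simp add: sum_distrib_left mult.assoc)
    also have "\<dots> = ((if p = s then 1 else 0) - (if p = t then 1 else 0)) * (W p s - W p t)"
      using dsum[OF assms(2,3), of "W p"] by simp
    finally show "(\<Sum>q<N. ((if p = s then 1 else 0) - (if p = t then 1 else 0)) * W p q *
            ((if q = s then 1 else 0) - (if q = t then (1::real) else 0)))
       = (W p s - W p t) * ((if p = s then 1 else 0) - (if p = t then 1 else 0))" by (simp add: mult.commute)
  qed
  also have "\<dots> = (W s s - W s t) - (W t s - W t t)" by (rule dsum[OF assms(2,3)])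
  finally show ?thesis by simp
qed

lemma blk_trace:
  assumes F: "sdr_feasible l W" and i: "i \<in> {1..l}"
  shows "(\<Sum>a<4. W (4*i+a) (4*i+a)) \<le> 1"
proof -
  have "W (4*i+a) (4*i+a) \<le> W a a" if a: "a < 4" for a
  proof -
    have ne: "a \<noteq> 4*i+a" using i by auto
    have lt: "a < 4*(l+1)" "4*i+a < 4*(l+1)" using a i by auto
    have "0 \<le> (\<Sum>p<4*(l+1). \<Sum>q<4*(l+1). ((if p = a then 1 else 0) - (if p = 4*i+a then 1 else 0)) * W p q *
            ((if q = a then 1 else 0) - (if q = 4*i+a then (1::real) else 0)))"
      using F by (simp add: sdr_feasible_def)
    also have "\<dots> = W a a - W a (4*i+a) - W (4*i+a) a + W (4*i+a) (4*i+a)"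
      by (rule qf2[OF ne lt])
    finally have "0 \<le> W a a - W a (4*i+a) - W (4*i+a) a + W (4*i+a) (4*i+a)" .
    moreover have "W (4*i+a) a = W a (4*i+a)" using feas_sym[OF F lt(2) lt(1)] .
    moreover have "W a (4*i+a) = W (4*i+a) (4*i+a)"
      using F i a unfolding sdr_feasible_def block_constraints_def by auto
    ultimately show ?thesis by linarith
  qed
  then have "(\<Sum>a<4. W (4*i+a) (4*i+a)) \<le> (\<Sum>a<4. W a a)" by (intro sum_mono) auto
  also have "\<dots> = 1" using F by (simp add: sdr_feasible_def block_constraints_def)
  finally show ?thesis .
qed

lemma outer_feasible:
  assumes "block_constraints l (outer \<omega>)"
  shows "sdr_feasible l (outer \<omega>)"
proof -
  have "0 \<le> (\<Sum>p<4*(l+1). \<Sum>q<4*(l+1). v p * outer \<omega> p q * v q)" for v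
  proof -
    have "(\<Sum>p<4*(l+1). \<Sum>q<4*(l+1). v p * outer \<omega> p q * v q) = (\<Sum>p<4*(l+1). v p * \<omega> p) * (\<Sum>q<4*(l+1). v q * \<omega> q)"
      by (simp add: outer_def sum_product mult.commute mult.left_commute)
    then show ?thesis by simp
  qed
  then show ?thesis using assms by (simp add: sdr_feasible_def outer_def mult.commute)
qed


definition om :: "nat set \<Rightarrow> real^4 \<Rightarrow> nat \<Rightarrow> real" where
  "om S w0 p = (if p div 4 \<in> S then w0 $ qi (p mod 4) else 0)"

lemma omega_star_om: "omega_star k w0 = om {..k} w0"
  by (simp add: fun_eq_iff omega_star_def om_def)

lemma om_blk: "a < 4 \<Longrightarrow> om S w0 (4*i+a) = (if i \<in> S then w0 $ qi a else 0)"
  by (simp add: om_def)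

lemma om_0: "a < 4 \<Longrightarrow> 0 \<in> S \<Longrightarrow> om S w0 a = w0 $ qi a"
  using om_blk[of a S w0 0] by simp

lemma sum_sq4: "(\<Sum>a<4. w0 $ qi a * w0 $ qi a) = w0 \<bullet> w0"
  by (simp add: qi_def numeral_eq_Suc lessThan_Suc inner_vec_def sum_4 algebra_simps)

lemma om_bc:
  assumes S: "0 \<in> S" and w: "norm w0 = 1"
  shows "block_constraints l (outer (om S w0))"
proof -
  have ww: "w0 \<bullet> w0 = 1" using w power2_norm_eq_inner[of w0] by simp
  have "(\<Sum>a<4. outer (om S w0) a a) = 1"
  proof -
    have "(\<Sum>a<4. outer (om S w0) a a) = (\<Sum>a<4. w0 $ qi a * w0 $ qi a)"
      by (rule sum.cong[OF refl]) (simp add: outer_def om_0[OF _ S])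
    then show ?thesis using sum_sq4 ww by simp
  qed
  moreover have "\<forall>i\<in>{1..l}. \<forall>a<4. \<forall>b<4. outer (om S w0) a (4*i+b) = outer (om S w0) (4*i+a) (4*i+b)"
    by (auto simp: outer_def om_0[OF _ S] om_blk)
  ultimately show ?thesis by (simp add: block_constraints_def)
qed

lemma om_obj:
  assumes S: "0 \<in> S" and w: "norm w0 = 1"
  shows "sdr_obj l y x c2 (outer (om S w0)) =
     (\<Sum>i\<in>{1..l}. if i \<in> S then w0 \<bullet> (Qmat (y i) (x i) *v w0) - c2 i else 0) + (\<Sum>i=1..l. c2 i)"
proof -
  have ww: "w0 \<bullet> w0 = 1" using w power2_norm_eq_inner[of w0] by simp
  have sym: "\<forall>p<4*(l+1). \<forall>q<4*(l+1). outer (om S w0) p q = outer (om S w0) q p"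
    by (simp add: outer_def mult.commute)
  have "sdr_obj l y x c2 (outer (om S w0)) = (\<Sum>i\<in>{1..l}. \<Sum>a<4. \<Sum>b<4. Mb y x c2 i a b * outer (om S w0) (4*i+a) (4*i+b)) + (\<Sum>i=1..l. c2 i)"
    by (rule obj_formula[OF sym om_bc[OF S w]])
  also have "(\<Sum>i\<in>{1..l}. \<Sum>a<4. \<Sum>b<4. Mb y x c2 i a b * outer (om S w0) (4*i+a) (4*i+b))
     = (\<Sum>i\<in>{1..l}. if i \<in> S then w0 \<bullet> (Qmat (y i) (x i) *v w0) - c2 i else 0)"
  proof (rule sum.cong[OF refl])
    fix i
    show "(\<Sum>a<4. \<Sum>b<4. Mb y x c2 i a b * outer (om S w0) (4*i+a) (4*i+b))
       = (if i \<in> S then w0 \<bullet> (Qmat (y i) (x i) *v w0) - c2 i else 0)"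
    proof (cases "i \<in> S")
      case True
      have "(\<Sum>a<4. \<Sum>b<4. Mb y x c2 i a b * outer (om S w0) (4*i+a) (4*i+b))
          = (\<Sum>a<4. \<Sum>b<4. (Qmat (y i) (x i) $ qi a $ qi b - (if a = b then c2 i else 0)) * (w0 $ qi a * w0 $ qi b))"
        by (intro sum.cong refl) (simp add: Mb_def outer_def om_blk True)
      also have "\<dots> = w0 \<bullet> (Qmat (y i) (x i) *v w0) - c2 i * (w0 \<bullet> w0)" by (rule form4v)
      finally show ?thesis using True ww by simp
    next
      case False
      then show ?thesis by (simp add: outer_def om_blk)
    qed
  qed
  finally show ?thesis .
qed

lemma tsplit:
  fixes A B :: "nat \<Rightarrow> nat \<Rightarrow> real"
  shows "(\<Sum>a<4. \<Sum>b<4. (A a b - (if a = b then c else 0)) * B a b)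
       = (\<Sum>a<4. \<Sum>b<4. A a b * B a b) - c * (\<Sum>a<4. B a a)"
proof -
  have "(\<Sum>a<4. \<Sum>b<4. (A a b - (if a = b then c else 0)) * B a b)
      = (\<Sum>a<4. (\<Sum>b<4. A a b * B a b) - (\<Sum>b<4::nat. if b = a then c * B a b else 0))"
  proof (rule sum.cong[OF refl])
    fix a
    have e: "(\<Sum>b<4. (if a = b then c else 0) * B a b) = (\<Sum>b<4::nat. if b = a then c * B a b else 0)"
      by (rule sum.cong) auto
    have "(\<Sum>b<4. (A a b - (if a = b then c else 0)) * B a b) = (\<Sum>b<4. A a b * B a b) - (\<Sum>b<4. (if a = b then c else 0) * B a b)"
      by (simp add: left_diff_distrib sum_subtractf)
    then show "(\<Sum>b<4. (A a b - (if a = b then c else 0)) * B a b) = (\<Sum>b<4. A a b * B a b) - (\<Sum>b<4::nat. if b = a then c * B a b else 0)"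
      using e by simp
  qed
  also have "\<dots> = (\<Sum>a<4. (\<Sum>b<4. A a b * B a b) - c * B a a)"
    by (intro sum.cong refl) (simp add: sum.delta)
  also have "\<dots> = (\<Sum>a<4. \<Sum>b<4. A a b * B a b) - c * (\<Sum>a<4. B a a)"
    by (simp add: sum_subtractf sum_distrib_left)
  finally show ?thesis .
qed

theorem theorem3p2:
  fixes w0 :: "real^4" and k l :: nat and y x :: "nat \<Rightarrow> real^3" and c2 :: "nat \<Rightarrow> real"
  assumes "norm w0 = 1"
    and "1 \<le> k" and "k < l"
    and "\<forall>i\<in>{1..k}. y i = rotq w0 *v x i"
    and "\<forall>i\<in>{1..l}. 0 \<le> c2 i"
  shows "((\<forall>j\<in>{k+1..l}. 0 < c2 j \<and> c2 j < lambda_min (Qmat (y j) (x j))) \<longrightarrow>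
            sdr_tight l y x c2 \<and> sdr_global_min l y x c2 (outer (omega_star k w0)))
       \<and> ((\<exists>j\<in>{k+1..l}. c2 j > w0 \<bullet> (Qmat (y j) (x j) *v w0)) \<longrightarrow>
            \<not> sdr_global_min l y x c2 (outer (omega_star k w0)))"
proof -
  let ?ws = "omega_star k w0"
  have S0: "0 \<in> {..k}" by simp
  have ws_om: "?ws = om {..k} w0" by (rule omega_star_om)
  have inl: "w0 \<bullet> (Qmat (y i) (x i) *v w0) = 0" if "i \<in> {1..k}" for i
    using Qmat_unit[OF assms(1), of "y i" "x i"] assms(4) that by simp
  define g where "g i = (if i \<in> {..k} then - c2 i else 0)" for i
  have objws: "sdr_obj l y x c2 (outer ?ws) = (\<Sum>i\<in>{1..l}. g i) + (\<Sum>i=1..l. c2 i)"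
  proof -
    have "(\<Sum>i\<in>{1..l}. if i \<in> {..k} then w0 \<bullet> (Qmat (y i) (x i) *v w0) - c2 i else 0) = (\<Sum>i\<in>{1..l}. g i)"
      by (rule sum.cong[OF refl]) (auto simp: g_def inl)
    then show ?thesis unfolding ws_om om_obj[OF S0 assms(1)] by simp
  qed
  have bc_ws: "block_constraints l (outer ?ws)" unfolding ws_om by (rule om_bc[OF S0 assms(1)])
  have feas_ws: "sdr_feasible l (outer ?ws)" by (rule outer_feasible[OF bc_ws])
  show ?thesis
  proof (rule conjI; rule impI)
    assume H: "\<forall>j\<in>{k+1..l}. 0 < c2 j \<and> c2 j < lambda_min (Qmat (y j) (x j))"
    have gm: "sdr_global_min l y x c2 (outer ?ws)"
      unfolding sdr_global_min_def
    proof (intro conjI allI impI feas_ws)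
      fix W assume F: "sdr_feasible l W"
      have symW: "\<forall>p<4*(l+1). \<forall>q<4*(l+1). W p q = W q p" using F by (simp add: sdr_feasible_def)
      have bcW: "block_constraints l W" using F by (simp add: sdr_feasible_def)
      have "g i \<le> (\<Sum>a<4. \<Sum>b<4. Mb y x c2 i a b * W (4*i+a) (4*i+b))" if i: "i \<in> {1..l}" for i
      proof (cases "i \<le> k")
        case True
        have t0: "0 \<le> (\<Sum>a<4. \<Sum>b<4. (Qmat (y i) (x i) $ qi a $ qi b - (if a = b then 0 else 0)) * W (4*i+a) (4*i+b))"
          by (rule trace_psd[where A="Qmat (y i) (x i)" and c=0 and B="\<lambda>a b. W (4*i+a) (4*i+b)",
                OF allI[OF Qmat_psd] blk_sym[OF F i] allI[OF blk_psd[OF F i]]])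
        have sp: "(\<Sum>a<4. \<Sum>b<4. Mb y x c2 i a b * W (4*i+a) (4*i+b))
            = (\<Sum>a<4. \<Sum>b<4. Qmat (y i) (x i) $ qi a $ qi b * W (4*i+a) (4*i+b)) - c2 i * (\<Sum>a<4. W (4*i+a) (4*i+a))"
          unfolding Mb_def using tsplit[of "\<lambda>a b. Qmat (y i) (x i) $ qi a $ qi b" "c2 i" "\<lambda>a b. W (4*i+a) (4*i+b)"] by simp
        have tr: "(\<Sum>a<4. W (4*i+a) (4*i+a)) \<le> 1" by (rule blk_trace[OF F i])
        have c0: "0 \<le> c2 i" using assms(5) i by auto
        have "c2 i * (\<Sum>a<4. W (4*i+a) (4*i+a)) \<le> c2 i * 1" using mult_left_mono[OF tr c0] .
        moreover have "g i = - c2 i" using True by (simp add: g_def)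
        ultimately show ?thesis using t0 sp by simp
      next
        case False
        then have ij: "i \<in> {k+1..l}" using i by auto
        have lm: "\<forall>w. c2 i * (w \<bullet> w) \<le> w \<bullet> (Qmat (y i) (x i) *v w)"
          using lam_min_bound[OF Qmat_sym] H ij by blast
        have "0 \<le> (\<Sum>a<4. \<Sum>b<4. (Qmat (y i) (x i) $ qi a $ qi b - (if a = b then c2 i else 0)) * W (4*i+a) (4*i+b))"
          by (rule trace_psd[where A="Qmat (y i) (x i)" and c="c2 i" and B="\<lambda>a b. W (4*i+a) (4*i+b)",
                OF lm blk_sym[OF F i] allI[OF blk_psd[OF F i]]])
        moreover have "g i = 0" using False by (simp add: g_def)
        ultimately show ?thesis by (simp add: Mb_def)
      qed
      then have "(\<Sum>i\<in>{1..l}. g i) \<le> (\<Sum>i\<in>{1..l}. \<Sum>a<4. \<Sum>b<4. Mb y x c2 i a b * W (4*i+a) (4*i+b))"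
        by (rule sum_mono)
      then show "sdr_obj l y x c2 (outer ?ws) \<le> sdr_obj l y x c2 W"
        unfolding objws obj_formula[OF symW bcW] by simp
    qed
    moreover have "qcqp_global_min l y x c2 ?ws"
      unfolding qcqp_global_min_def qcqp_feasible_def
      using bc_ws gm outer_feasible unfolding sdr_global_min_def by blast
    ultimately show "sdr_tight l y x c2 \<and> sdr_global_min l y x c2 (outer ?ws)"
      unfolding sdr_tight_def by blast
  next
    assume "\<exists>j\<in>{k+1..l}. c2 j > w0 \<bullet> (Qmat (y j) (x j) *v w0)"
    then obtain j where j: "j \<in> {k+1..l}" and cj: "c2 j > w0 \<bullet> (Qmat (y j) (x j) *v w0)" by blast
    define S' where "S' = {..k} \<union> {j}"
    have S'0: "0 \<in> S'" by (simp add: S'_def)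
    define h' where "h' i = (if i \<in> S' then w0 \<bullet> (Qmat (y i) (x i) *v w0) - c2 i else 0)" for i
    have obj': "sdr_obj l y x c2 (outer (om S' w0)) = (\<Sum>i\<in>{1..l}. h' i) + (\<Sum>i=1..l. c2 i)"
      unfolding h'_def by (rule om_obj[OF S'0 assms(1)])
    have "(\<Sum>i\<in>{1..l}. h' i) < (\<Sum>i\<in>{1..l}. g i)"
    proof (rule sum_strict_mono_ex1)
      show "finite {1..l}" by simp
      show "\<forall>i\<in>{1..l}. h' i \<le> g i"
      proof
        fix i assume i: "i \<in> {1..l}"
        show "h' i \<le> g i"
        proof (cases "i \<le> k")
          case True
          then have "i \<in> {1..k}" using i by auto
          then show ?thesis using True inl by (simp add: h'_def g_def S'_def)
        next
          case False
          then show ?thesis using cj by (simp add: h'_def g_def S'_def)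
        qed
      qed
      show "\<exists>i\<in>{1..l}. h' i < g i"
      proof
        show "j \<in> {1..l}" using j assms(2) by auto
        show "h' j < g j" using j cj by (simp add: h'_def g_def S'_def)
      qed
    qed
    then have "sdr_obj l y x c2 (outer (om S' w0)) < sdr_obj l y x c2 (outer ?ws)" using obj' objws by simp
    moreover have "sdr_feasible l (outer (om S' w0))" by (rule outer_feasible[OF om_bc[OF S'0 assms(1)]])
    ultimately show "\<not> sdr_global_min l y x c2 (outer ?ws)" unfolding sdr_global_min_def by force
  qed
qed

end
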